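(* Let $K$ be an algebraically closed field of characteristic $0$ and let $d,n$ be integers with $1<d<n$ and $\gcd(n,d)=1$. Then $n+d$ is $(n,d)$-reachable over $K$ if and only if $d^2-2d<n$.
   Context: For a polynomial $f(x)\in K[x]$ of degree $n$ without repeated roots, $\mathcal{C}_{f,d}$ denotes the smooth projective model of the affine curve $y^d=f(x)$; it has a unique point at infinity $O$. $\mathcal{C}_{f,d}$ is identified with its image in its Jacobian $J(\mathcal{C}_{f,d})$ via $Q\mapsto \operatorname{cl}((Q)-(O))$ (linear equivalence class), and a point $Q\in\mathcal{C}_{f,d}(K)$ has order $m$ if $\operatorname{cl}((Q)-(O))$ has order $m$ in $J(\mathcal{C}_{f,d})(K)$. An integer $m>1$ is called $(n,d)$-reachable over $K$ if there exists a monic polynomial $f(x)\in K[x]$ of degree $n$ without repeated roots such that $\mathcal{C}_{f,d}(K)$ contains a point of order $m$. *)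

theory Defs
  imports "HOL-Computational_Algebra.Polynomial"
begin

text \<open>Superelliptic curve y^d = f(x), f of degree n = degree f, gcd(n,d) = 1.
  Regular functions on the affine part form the coordinate ring K[x,y]/(y^d - f(x));
  every element has a unique representative h(x,y) = sum_{j<d} h_j(x) y^j, which we
  encode as a polynomial in y with coefficients in K[x] ('a poly poly) of y-degree < d.\<close>

definition on_curve :: "'a::field poly \<Rightarrow> nat \<Rightarrow> 'a \<Rightarrow> 'a \<Rightarrow> bool" where
  "on_curve f d a b \<longleftrightarrow> b ^ d = poly f a"

definition eval_cr :: "'a::field poly poly \<Rightarrow> 'a \<Rightarrow> 'a \<Rightarrow> 'a" where
  "eval_cr h a b = poly (map_poly (\<lambda>c. poly c a) h) b"

text \<open>Pole order at the point at infinity O: ord_O(x) = -d, ord_O(y) = -n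
  (the pole orders of the monomials x^i y^j, j<d, are pairwise distinct as gcd(n,d)=1).\<close>
definition pole_order_O :: "'a::field poly \<Rightarrow> nat \<Rightarrow> 'a poly poly \<Rightarrow> nat" where
  "pole_order_O f d h =
     Max {d * degree (coeff h j) + degree f * j | j. j \<le> degree h \<and> coeff h j \<noteq> 0}"

text \<open>k(Q) - k(O) is a principal divisor, for the affine point Q = (a,b):
  there is a nonzero regular function on the affine part whose pole order at O is k
  and whose only affine zero is Q (then its divisor is exactly k(Q) - k(O)).\<close>
definition principal_multiple :: "'a::field poly \<Rightarrow> nat \<Rightarrow> 'a \<Rightarrow> 'a \<Rightarrow> nat \<Rightarrow> bool" where
  "principal_multiple f d a b k \<longleftrightarrow>
     (\<exists>h :: 'a poly poly. h \<noteq> 0 \<and> degree h < d \<and> pole_order_O f d h = k \<and>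
        (\<forall>a' b'. on_curve f d a' b' \<and> eval_cr h a' b' = 0 \<longrightarrow> a' = a \<and> b' = b))"

text \<open>The affine point Q = (a,b) has order m in the Jacobian: cl((Q) - (O)) has order m.\<close>
definition point_order :: "'a::field poly \<Rightarrow> nat \<Rightarrow> 'a \<Rightarrow> 'a \<Rightarrow> nat \<Rightarrow> bool" where
  "point_order f d a b m \<longleftrightarrow> on_curve f d a b \<and> 0 < m \<and> principal_multiple f d a b m \<and>
     (\<forall>k. 0 < k \<and> k < m \<longrightarrow> \<not> principal_multiple f d a b k)"

text \<open>m > 1 is (n,d)-reachable over K.  (The point O itself has order 1, so only
  affine points need to be considered.)\<close>
definition reachable :: "'a::field itself \<Rightarrow> nat \<Rightarrow> nat \<Rightarrow> nat \<Rightarrow> bool" where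
  "reachable K n d m \<longleftrightarrow> 1 < m \<and>
     (\<exists>f :: 'a poly. lead_coeff f = 1 \<and> degree f = n \<and> rsquarefree f \<and>
        (\<exists>a b. point_order f d a b m))"

definition alg_closed :: "'a::field itself \<Rightarrow> bool" where
  "alg_closed K \<longleftrightarrow> (\<forall>p :: 'a poly. 0 < degree p \<longrightarrow> (\<exists>x. poly p x = 0))"

end

theory Submission
  imports Defs
begin


lemma alg_root:
  assumes "alg_closed TYPE('a::field)" "0 < degree (p::'a poly)"
  shows "\<exists>x. poly p x = 0"
  using assms unfolding alg_closed_def by blast

lemma alg_dth_root:
  assumes "alg_closed TYPE('a::field)" "0 < d"
  shows "\<exists>s::'a. s ^ d = c"
proof -
  have c1: "coeff (monom 1 d - [:c:] :: 'a poly) d = 1"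
    using assms(2) by (cases d) (auto simp: coeff_monom)
  have "degree (monom 1 d - [:c:] :: 'a poly) \<le> d"
    by (intro degree_diff_le) (auto simp: degree_monom_le)
  moreover have "d \<le> degree (monom 1 d - [:c:] :: 'a poly)" using c1 by (intro le_degree) simp
  ultimately have "degree (monom 1 d - [:c:] :: 'a poly) = d" by simp
  then obtain s where "poly (monom 1 d - [:c:]) s = 0"
    using alg_root[OF assms(1), of "monom 1 d - [:c:]"] assms(2) by auto
  then show ?thesis by (auto simp: poly_monom)
qed

lemma alg_zeta:
  assumes "alg_closed TYPE('a::field_char_0)" "1 < d"
  shows "\<exists>z::'a. z ^ d = 1 \<and> z \<noteq> 1"
proof -
  define P :: "'a poly" where "P = (\<Sum>i<d. monom 1 i)"
  have c: "coeff P (d-1) = 1" unfolding P_def coeff_sum using assms(2)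
    by (simp add: coeff_monom)
  have "degree P \<le> d - 1" unfolding P_def
    by (rule degree_sum_le) (auto simp: degree_monom_eq)
  moreover have "d - 1 \<le> degree P" using c by (intro le_degree) simp
  ultimately have "degree P = d - 1" by simp
  then obtain z where z: "poly P z = 0" using alg_root[OF assms(1)] assms(2) by fastforce
  have pz: "poly P z = (\<Sum>i<d. z ^ i)" unfolding P_def poly_sum by (simp add: poly_monom)
  have "z ^ d - 1 = (z - 1) * (\<Sum>i<d. z ^ i)" by (rule power_diff_1_eq)
  with z pz have "z ^ d = 1" by simp
  moreover have "z \<noteq> 1"
  proof
    assume "z = 1"
    with z pz have "(of_nat d :: 'a) = 0" by simp
    with assms(2) show False by simp
  qed
  ultimately show ?thesis by blast
qed

lemma all_roots_eq:
  assumes "alg_closed TYPE('a::field)" "(p::'a poly) \<noteq> 0" "\<And>r. poly p r = 0 \<Longrightarrow> r = a"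
  shows "p = smult (lead_coeff p) ([:-a,1:] ^ degree p)"
  using assms(2,3)
proof (induction "degree p" arbitrary: p)
  case 0
  then have "p = [:coeff p 0:]" using degree_0_id by metis
  then show ?case using 0 by simp
next
  case (Suc m)
  then obtain r where "poly p r = 0" using alg_root[OF assms(1), of p] by auto
  with Suc have "r = a" by blast
  with \<open>poly p r = 0\<close> obtain q where q: "p = [:-a,1:] * q" by (metis dvd_def poly_eq_0_iff_dvd)
  have q0: "q \<noteq> 0" using Suc.prems(1) q by (metis mult_zero_right)
  have dq: "degree p = Suc (degree q)" unfolding q by (subst degree_mult_eq) (use q0 in auto)
  have qr: "\<And>r. poly q r = 0 \<Longrightarrow> r = a"
  proof -
    fix r assume "poly q r = 0"
    then have "poly p r = 0" unfolding q by simp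
    then show "r = a" by (rule Suc.prems(2))
  qed
  have mq: "m = degree q" using dq Suc.hyps(2) by simp
  have qf: "q = smult (lead_coeff q) ([:-a,1:] ^ degree q)" by (rule Suc.hyps(1)[OF mq q0 qr])
  have lc: "lead_coeff p = lead_coeff q" unfolding q lead_coeff_mult by simp
  have "p = [:-a,1:] * smult (lead_coeff q) ([:-a,1:] ^ degree q)" using q qf by metis
  also have "\<dots> = smult (lead_coeff p) ([:-a,1:] ^ degree p)"
    using lc dq by (simp only: dq mult_smult_right power_Suc)
  finally show ?case .
qed

lemma deg1_form: "degree (h::'a::zero poly) \<le> 1 \<Longrightarrow> h = [:coeff h 0, coeff h 1:]"
  by (intro poly_eqI) (auto simp: coeff_pCons coeff_eq_0 split: nat.splits)

lemma eval_cr_deg1: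
  assumes "degree h \<le> 1"
  shows "eval_cr h a b = poly (coeff h 0) a + poly (coeff h 1) a * b"
proof -
  have "eval_cr h a b = eval_cr [:coeff h 0, coeff h 1:] a b" using deg1_form[OF assms] by simp
  also have "\<dots> = poly (coeff h 0) a + poly (coeff h 1) a * b"
    unfolding eval_cr_def by (simp add: map_poly_pCons)
  finally show ?thesis .
qed

lemma po_finite: "finite {d * degree (coeff h j) + degree f * j | j. j \<le> degree h \<and> coeff h j \<noteq> 0}"
proof -
  have "{d * degree (coeff h j) + degree f * j | j. j \<le> degree h \<and> coeff h j \<noteq> 0}
     \<subseteq> (\<lambda>j. d * degree (coeff h j) + degree f * j) ` {..degree h}" by auto
  then show ?thesis by (rule finite_subset) simp
qed

lemma po_ge:
  assumes "j \<le> degree h" "coeff h j \<noteq> 0"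
  shows "d * degree (coeff h j) + degree f * j \<le> pole_order_O f d h"
  unfolding pole_order_O_def using assms by (intro Max_ge[OF po_finite]) blast

lemma po_in:
  assumes "h \<noteq> 0"
  shows "\<exists>j \<le> degree h. coeff h j \<noteq> 0 \<and> pole_order_O f d h = d * degree (coeff h j) + degree f * j"
proof -
  have "pole_order_O f d h \<in> {d * degree (coeff h j) + degree f * j | j. j \<le> degree h \<and> coeff h j \<noteq> 0}"
    unfolding pole_order_O_def using assms by (intro Max_in[OF po_finite]) auto
  then show ?thesis by blast
qed



lemma coeff_lin: "coeff ([:c,1:] * (q::'a::comm_ring_1 poly)) j = c * coeff q j + (if j = 0 then 0 else coeff q (j-1))"
  by (cases j) (simp_all add: mult_pCons_left coeff_pCons)

definition rr :: "nat \<Rightarrow> nat \<Rightarrow> 'a::field_char_0" where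
  "rr n d = of_nat (n+d) / of_nat d"
definition TT :: "nat \<Rightarrow> nat \<Rightarrow> 'a::field_char_0 poly" where
  "TT n d = (\<Sum>k<d. monom (rr n d gchoose k) k)"
definition Lop :: "'a::field_char_0 \<Rightarrow> nat \<Rightarrow> 'a poly \<Rightarrow> 'a poly" where
  "Lop c N F = [:c,1:] * pderiv F - smult (of_nat N) F"

lemma coeff_TT: "coeff (TT n d) j = (if j < d then rr n d gchoose j else 0)"
  unfolding TT_def coeff_sum by (auto simp: coeff_monom)

lemma degree_TT: "degree (TT n d) \<le> d - 1"
  unfolding TT_def by (rule degree_sum_le) (auto simp: degree_monom_le intro: order.trans[OF degree_monom_le])

lemma poly_TT0: "0 < d \<Longrightarrow> poly (TT n d) 0 = 1"
  by (simp add: poly_0_coeff_0 coeff_TT)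

lemma coeff_Lop: "coeff (Lop c N F) j =
   c * of_nat (Suc j) * coeff F (Suc j) + of_nat j * coeff F j - of_nat N * coeff F j"
  unfolding Lop_def by (cases j) (simp_all add: coeff_lin coeff_pderiv algebra_simps)

definition GG :: "nat \<Rightarrow> nat \<Rightarrow> 'a::field_char_0 poly" where
  "GG n d = [:1,1:] ^ (n+d) - TT n d ^ d"
definition ff :: "nat \<Rightarrow> nat \<Rightarrow> 'a::field_char_0 poly" where
  "ff n d = poly_shift d (GG n d)"

lemma Lop_diff: "Lop c N (A - B) = Lop c N A - Lop c N B"
  unfolding Lop_def by (simp add: pderiv_diff algebra_simps smult_diff_right)

lemma Lop_lin_pow: "0 < N \<Longrightarrow> Lop c N ([:c,1:] ^ N) = 0"
proof -
  assume N: "0 < N"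
  have pd: "pderiv [:c,1:] = 1" by (simp add: pderiv_pCons)
  have e: "[:c,1:] * ([:c,1:] ^ (N - 1)) = [:c,1:] ^ N" using N by (cases N) simp_all
  have "[:c,1:] * pderiv ([:c,1:] ^ N) = smult (of_nat N) ([:c,1:] * ([:c,1:] ^ (N - 1)))"
    unfolding pderiv_power pd by (simp only: mult_smult_right mult_1_right)
  then show ?thesis unfolding Lop_def e by simp
qed

context
  fixes n d :: nat
  assumes d1: "1 < d" and dn: "d < n" and cop: "coprime n d"
begin

lemma not_dvd_nd: "\<not> d dvd n"
  using cop d1 by (metis coprime_absorb_left nat_dvd_1_iff_1 less_irrefl coprime_commute)

lemma r_mult: "of_nat d * (rr n d :: 'a::field_char_0) = of_nat (n+d)"
  using d1 by (simp add: rr_def)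

lemma r_not_nat: "(rr n d :: 'a::field_char_0) \<noteq> of_nat i"
proof
  assume "rr n d = (of_nat i :: 'a)"
  then have "(of_nat (n+d) :: 'a) = of_nat (d*i)" using r_mult[where 'a='a] by simp
  then have "n + d = d * i" by (simp only: of_nat_eq_iff)
  then have "d dvd n" by (metis dvd_add_left_iff dvd_refl dvd_triv_left)
  with not_dvd_nd show False by simp
qed

lemma Cc_nz: "(rr n d gchoose k :: 'a::field_char_0) \<noteq> 0"
proof
  assume "(rr n d gchoose k :: 'a) = 0"
  then have "(\<Prod>i = 0..<k. rr n d - of_nat i :: 'a) = 0" by (simp add: gbinomial_mult_fact[symmetric])
  then obtain i where "rr n d - of_nat i = (0::'a)" by auto
  then have "rr n d = (of_nat i :: 'a)" by simp
  with r_not_nat show False by blast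
qed

lemma I1: "[:1,1:] * pderiv (TT n d) - smult (rr n d) (TT n d)
   = - smult (of_nat d * (rr n d gchoose d)) (monom (1::'a::field_char_0) (d-1))"
proof (rule poly_eqI)
  fix j
  have m: "rr n d * (rr n d gchoose j) = of_nat j * (rr n d gchoose j) + of_nat (Suc j) * (rr n d gchoose (Suc j) :: 'a)"
    by (rule gbinomial_mult_1)
  have "coeff ([:1,1:] * pderiv (TT n d) - smult (rr n d) (TT n d)) j
     = of_nat (Suc j) * coeff (TT n d) (Suc j) + of_nat j * coeff (TT n d) j - rr n d * coeff (TT n d) j"
    by (cases j) (simp_all add: coeff_lin coeff_pderiv)
  also have "\<dots> = coeff (- smult (of_nat d * (rr n d gchoose d)) (monom (1::'a) (d-1))) j"
  proof -
    consider "Suc j < d" | "Suc j = d" | "d < Suc j" by linarith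
    then show ?thesis
    proof cases
      case 1 then show ?thesis using m by (simp add: coeff_TT coeff_monom algebra_simps)
    next
      case 2 then have "j = d - 1" by simp
      then show ?thesis using m 2 by (simp add: coeff_TT coeff_monom algebra_simps)
    next
      case 3 then show ?thesis using d1 by (simp add: coeff_TT coeff_monom)
    qed
  qed
  finally show "coeff ([:1,1:] * pderiv (TT n d) - smult (rr n d) (TT n d)) j
     = coeff (- smult (of_nat d * (rr n d gchoose d)) (monom (1::'a) (d-1))) j" .
qed

lemma TT_m1: "poly (TT n d :: 'a::field_char_0 poly) (-1) \<noteq> 0"
proof
  assume a: "poly (TT n d :: 'a poly) (-1) = 0"
  have "poly ([:1,1:] * pderiv (TT n d) - smult (rr n d) (TT n d)) (-1::'a)
     = poly (- smult (of_nat d * (rr n d gchoose d)) (monom (1::'a) (d-1))) (-1)"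
    by (simp only: I1)
  then have "(of_nat d * (rr n d gchoose d)) * (-1::'a) ^ (d-1) = 0"
    using a by (simp add: poly_monom)
  then show False using d1 Cc_nz[of d, where 'a='a] by simp
qed


lemma Lop_T: "Lop 1 (n+d) (TT n d ^ d) =
   - smult (of_nat d ^ 2 * (rr n d gchoose d)) (monom (1::'a::field_char_0) (d-1) * TT n d ^ (d-1))"
proof -
  let ?T = "TT n d :: 'a poly"
  have p: "?T ^ d = ?T ^ (d-1) * ?T" using d1 by (cases d) (simp_all add: power_Suc2 del: power_Suc)
  have nd: "(of_nat (n+d) :: 'a) = of_nat d * rr n d" by (rule r_mult[symmetric])
  have e1: "[:1,1:] * smult (of_nat d) (?T^(d-1) * pderiv ?T) = smult (of_nat d) (?T^(d-1) * ([:1,1:] * pderiv ?T))"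
    by (simp only: mult_smult_right mult.left_commute)
  have e2: "smult (of_nat d * rr n d) (?T^d) = smult (of_nat d) (?T^(d-1) * smult (rr n d) ?T)"
    by (simp only: p mult_smult_right smult_smult)
  have "Lop 1 (n+d) (?T ^ d) = smult (of_nat d) (?T ^ (d-1) * ([:1,1:] * pderiv ?T - smult (rr n d) ?T))"
    unfolding Lop_def pderiv_power nd e1 e2 by (simp only: right_diff_distrib smult_diff_right)
  also have "\<dots> = - smult (of_nat d ^ 2 * (rr n d gchoose d)) (monom (1::'a) (d-1) * ?T ^ (d-1))"
    unfolding I1 by (simp only: mult_minus_right mult_smult_right smult_minus_right smult_smult power2_eq_square mult.commute mult.assoc) (simp add: mult_ac)
  finally show ?thesis .
qed

lemma Lop_G: "Lop 1 (n+d) (GG n d) =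
   smult (of_nat d ^ 2 * (rr n d gchoose d)) (monom (1::'a::field_char_0) (d-1) * TT n d ^ (d-1))"
  unfolding GG_def Lop_diff Lop_T using Lop_lin_pow[of "n+d" "1::'a"] d1 by simp

lemma G_rec:
  assumes "j < d - 1"
  shows "of_nat (Suc j) * coeff (GG n d :: 'a::field_char_0 poly) (Suc j)
       = (of_nat (n+d) - of_nat j) * coeff (GG n d) j"
proof -
  have "coeff (Lop 1 (n+d) (GG n d :: 'a poly)) j = 0"
    unfolding Lop_G using assms by (simp add: coeff_monom_mult)
  then show ?thesis unfolding coeff_Lop by (simp add: algebra_simps)
qed

lemma G_low: "j < d \<Longrightarrow> coeff (GG n d :: 'a::field_char_0 poly) j = 0"
proof (induction j)
  case 0
  have "coeff (GG n d :: 'a poly) 0 = poly (GG n d) 0" by (simp add: poly_0_coeff_0)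
  also have "\<dots> = 0" unfolding GG_def using poly_TT0[of d n, where 'a='a] d1 by simp
  finally show ?case .
next
  case (Suc j)
  have r: "of_nat (Suc j) * coeff (GG n d :: 'a poly) (Suc j) = (of_nat (n+d) - of_nat j) * coeff (GG n d) j"
    by (rule G_rec) (use Suc.prems in simp)
  have "coeff (GG n d :: 'a poly) j = 0" using Suc by simp
  then have "of_nat (Suc j) * coeff (GG n d :: 'a poly) (Suc j) = 0" using r by (simp del: of_nat_Suc)
  then show ?case by (metis mult_eq_0_iff of_nat_eq_0_iff nat.distinct(1))
qed

lemma G_d: "coeff (GG n d :: 'a::field_char_0 poly) d = of_nat d * (rr n d gchoose d)"
proof -
  let ?C = "rr n d gchoose d :: 'a"
  have t0: "coeff (TT n d ^ (d-1) :: 'a poly) 0 = 1"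
    using poly_TT0[of d n, where 'a='a] d1 by (simp add: poly_0_coeff_0[symmetric])
  have "coeff (Lop 1 (n+d) (GG n d :: 'a poly)) (d-1) = of_nat d ^ 2 * ?C"
    unfolding Lop_G using t0 by (simp add: coeff_monom_mult)
  moreover have "coeff (GG n d :: 'a poly) (d-1) = 0" using G_low[where 'a='a] d1 by simp
  ultimately have "of_nat d * coeff (GG n d :: 'a poly) d = of_nat d * (of_nat d * ?C)"
    unfolding coeff_Lop using d1 by (simp add: power2_eq_square)
  then show ?thesis using d1 by simp
qed

lemma G_eq: "GG n d = monom 1 d * (ff n d :: 'a::field_char_0 poly)"
  by (rule poly_eqI) (auto simp: coeff_monom_mult ff_def coeff_poly_shift G_low)

lemma poly_G: "poly (GG n d) x = x ^ d * poly (ff n d :: 'a::field_char_0 poly) x"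
  by (simp add: G_eq poly_monom)

lemma ff0: "poly (ff n d :: 'a::field_char_0 poly) 0 \<noteq> 0"
  using G_d[where 'a='a] Cc_nz[of d, where 'a='a] d1 by (simp add: poly_0_coeff_0 ff_def coeff_poly_shift)

lemma G_deg:
  assumes "int d ^ 2 - 2 * int d < int n"
  shows "degree (GG n d :: 'a::field_char_0 poly) = n + d \<and> lead_coeff (GG n d :: 'a poly) = 1"
proof -
  have "int (d * d) < int (n + 2 * d)" using assms by (simp add: power2_eq_square)
  then have "d * d < n + 2 * d" by (simp only: of_nat_less_iff)
  moreover have "(d - 1) * d = d * d - d" by (simp add: diff_mult_distrib)
  ultimately have lt: "(d - 1) * d < n + d" by linarith
  have "degree (TT n d ^ d :: 'a poly) \<le> (d-1) * d"
    by (rule order.trans[OF degree_power_le]) (use degree_TT[of n d, where 'a='a] in simp)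
  then have dT: "degree (TT n d ^ d :: 'a poly) < degree ([:1,1:] ^ (n+d) :: 'a poly)"
    using lt by (simp add: degree_linear_power)
  have lc: "coeff ([:1,1:] ^ (n+d) :: 'a poly) (n+d) = 1"
    using lead_coeff_power[of "[:1::'a,1:]" "n+d"] by (simp add: degree_linear_power)
  have "GG n d = [:1,1:] ^ (n+d) + - (TT n d ^ d :: 'a poly)" unfolding GG_def by simp
  moreover have "degree ([:1,1:] ^ (n+d) + - (TT n d ^ d :: 'a poly)) = n + d"
    using dT by (subst degree_add_eq_left) (simp_all add: degree_linear_power)
  moreover have "lead_coeff ([:1,1:] ^ (n+d) + - (TT n d ^ d :: 'a poly)) = 1"
    using dT lc by (subst degree_add_eq_left) (simp_all add: degree_linear_power coeff_eq_0)
  ultimately show ?thesis by simp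
qed

lemma ff_deg:
  assumes "int d ^ 2 - 2 * int d < int n"
  shows "degree (ff n d :: 'a::field_char_0 poly) = n \<and> lead_coeff (ff n d :: 'a poly) = 1"
proof -
  have f0: "ff n d \<noteq> (0 :: 'a poly)" using ff0[where 'a='a] by auto
  have dm: "degree (monom (1::'a) d) = d" by (rule degree_monom_eq) simp
  have A: "degree (GG n d :: 'a poly) = d + degree (ff n d :: 'a poly)"
  proof -
    have "degree (monom (1::'a) d * ff n d) = degree (monom (1::'a) d) + degree (ff n d :: 'a poly)"
      by (rule degree_mult_eq) (simp_all add: f0)
    then show ?thesis unfolding G_eq dm .
  qed
  have B: "lead_coeff (GG n d :: 'a poly) = lead_coeff (ff n d :: 'a poly)"
    unfolding G_eq using lead_coeff_mult[of "monom (1::'a) d" "ff n d"] by (simp only: lead_coeff_monom mult_1)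
  have g1: "degree (GG n d :: 'a poly) = n + d" and g2: "lead_coeff (GG n d :: 'a poly) = 1"
    using G_deg[OF assms, where 'a='a] by blast+
  have "degree (ff n d :: 'a poly) = n" using A g1 by simp
  moreover have "lead_coeff (ff n d :: 'a poly) = 1" using trans[OF B[symmetric] g2] .
  ultimately show ?thesis by blast
qed

lemma ff_sqf: "rsquarefree (ff n d :: 'a::field_char_0 poly)"
  unfolding rsquarefree_roots
proof (intro allI notI)
  fix g :: 'a
  assume a: "poly (ff n d) g = 0 \<and> poly (pderiv (ff n d)) g = 0"
  let ?T = "TT n d :: 'a poly"
  have pdG: "pderiv (GG n d) = monom 1 d * pderiv (ff n d) + ff n d * pderiv (monom (1::'a) d)"
    unfolding G_eq pderiv_mult by simp
  have "poly (Lop 1 (n+d) (GG n d)) g = 0"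
    unfolding Lop_def using a by (simp add: pdG poly_G)
  then have "of_nat d ^ 2 * (rr n d gchoose d) * (g ^ (d-1) * poly ?T g ^ (d-1)) = 0"
    unfolding Lop_G by (simp add: poly_monom)
  then have "g ^ (d-1) * poly ?T g ^ (d-1) = 0" using Cc_nz[of d, where 'a='a] d1 by simp
  then have "g = 0 \<or> poly ?T g = 0" by auto
  then show False
  proof
    assume "g = 0" then show False using a ff0[where 'a='a] by simp
  next
    assume t: "poly ?T g = 0"
    have "poly (GG n d) g = 0" using a by (simp add: poly_G)
    then have "(1 + g) ^ (n + d) = 0" using t d1 by (simp add: GG_def)
    then have "g = -1" by (simp add: add_eq_0_iff)
    with t TT_m1[where 'a='a] show False by simp
  qed
qed

end


context
  fixes n d :: nat
  assumes d1: "1 < d" and dn: "d < n" and cop: "coprime n d"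
begin

lemma no_small:
  fixes z :: "'a::field_char_0"
  assumes ac: "alg_closed TYPE('a)" and hyp: "int d ^ 2 - 2 * int d < int n"
    and z: "z ^ d = -1" and k0: "0 < k" and kN: "k < n + d"
  shows "\<not> principal_multiple (ff n d) d (-1) (- poly (smult z (TT n d)) (-1)) k"
proof
  define T where "T = (TT n d :: 'a poly)"
  define f where "f = (ff n d :: 'a poly)"
  define p where "p = smult z T"
  define b where "b = - poly p (-1)"
  assume "principal_multiple (ff n d) d (-1) (- poly (smult z (TT n d)) (-1)) k"
  then obtain h where hnz: "h \<noteq> 0" and hd: "degree h < d" and hp: "pole_order_O f d h = k"
    and hz: "\<And>a' b'. on_curve f d a' b' \<and> eval_cr h a' b' = 0 \<Longrightarrow> a' = -1 \<and> b' = b"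
    unfolding principal_multiple_def f_def b_def p_def T_def by blast
  have df: "degree f = n" using ff_deg[OF d1 dn cop hyp, where 'a='a] unfolding f_def by blast
  have z0: "z \<noteq> 0" using z d1 by (metis zero_neq_neg_one power_0_left not_one_less_zero)
  have T0: "poly T 0 = 1" unfolding T_def using poly_TT0[where 'a='a] d1 by simp
  have b0: "b \<noteq> 0" unfolding b_def p_def T_def using z0 TT_m1[OF d1 dn cop, where 'a='a] by simp
  obtain ze :: 'a where ze: "ze ^ d = 1" "ze \<noteq> 1" using alg_zeta[OF ac d1] by blast
  have pf: "x ^ d * poly f x = (1 + x) ^ (n + d) - poly T x ^ d" for x
    unfolding f_def T_def using poly_G[OF d1 dn cop, of x] by (simp add: GG_def)
  have lc: "coeff h (degree h) \<noteq> 0" using hnz by simp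
  have "d * degree (coeff h (degree h)) + degree f * degree h \<le> k"
    using po_ge[of "degree h" h d f] lc hp by simp
  then have nk: "n * degree h \<le> k" using df by simp
  have dh: "degree h \<le> 1"
  proof (rule ccontr)
    assume "\<not> degree h \<le> 1"
    then have "n * 2 \<le> n * degree h" by simp
    with nk kN dn show False by linarith
  qed
  show False
  proof (cases "degree h = 0")
    case True
    define h0 where "h0 = coeff h 0"
    have h1: "coeff h 1 = 0" using True by (simp add: coeff_eq_0)
    have h00: "h0 \<noteq> 0" using hnz True unfolding h0_def by (metis degree_0_id pCons_0_0)
    obtain j where "j \<le> degree h" "coeff h j \<noteq> 0" "pole_order_O f d h = d * degree (coeff h j) + degree f * j"
      using po_in[OF hnz] by blast
    then have "k = d * degree h0" using True hp unfolding h0_def by simp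
    then have "0 < degree h0" using k0 by (cases "degree h0") simp_all
    then obtain r where r: "poly h0 r = 0" using alg_root[OF ac] by blast
    obtain s where s: "s ^ d = poly f r" using alg_dth_root[OF ac] d1 by (metis zero_less_one less_trans)
    have ev: "eval_cr h r y = 0" for y using eval_cr_deg1[of h r y] True r h1 unfolding h0_def by simp
    have "on_curve f d r s" using s unfolding on_curve_def by simp
    then have 1: "r = -1 \<and> s = b" using hz ev by blast
    have "on_curve f d r (ze * s)" using s ze unfolding on_curve_def by (simp add: power_mult_distrib)
    then have "ze * s = b" using hz ev by blast
    with 1 have "(ze - 1) * b = 0" by (simp add: algebra_simps)
    with ze b0 show False by simp
  next
    case False
    then have dh1: "degree h = 1" using dh by simp
    define h0 where "h0 = coeff h 0"
    define h1 where "h1 = coeff h 1"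
    have h1nz: "h1 \<noteq> 0" using dh1 lc unfolding h1_def by simp
    have "d * degree h1 + degree f * 1 \<le> k" using po_ge[of 1 h d f] dh1 h1nz hp unfolding h1_def by simp
    then have "degree h1 = 0" using kN df by (cases "degree h1") simp_all
    then obtain c where hc: "h1 = [:c:]" by (metis degree_0_id)
    have c0: "c \<noteq> 0" using h1nz hc by simp
    have dh0: "d * degree h0 < n + d"
    proof (cases "h0 = 0")
      case True then show ?thesis using d1 by simp
    next
      case False
      then have "d * degree h0 + degree f * 0 \<le> k" using po_ge[of 0 h d f] hp unfolding h0_def by simp
      then show ?thesis using kN by simp
    qed
    have ev: "eval_cr h x y = poly h0 x + c * y" for x y
      using eval_cr_deg1[of h x y] dh1 hc unfolding h0_def h1_def by simp
    define R where "R = smult (- 1 / c) h0"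
    define E where "E = R ^ d - f"
    have dR: "degree R = degree h0" unfolding R_def using c0 by simp
    have zE: "r = -1 \<and> poly R r = b" if "poly E r = 0" for r
    proof -
      have "on_curve f d r (poly R r)" using that unfolding on_curve_def E_def by simp
      moreover have "eval_cr h r (poly R r) = 0" unfolding ev R_def using c0 by (simp add: field_simps)
      ultimately show ?thesis using hz by blast
    qed
    have E0: "E \<noteq> 0"
    proof
      assume "E = 0"
      then have "(0::'a) = -1" using zE[of 0] by simp
      then show False by simp
    qed
    have degE: "n \<le> degree E \<and> degree R + 1 < degree E \<and> degree E < n + d"
    proof -
      consider "d * degree R < n" | "d * degree R = n" | "n < d * degree R" by linarith
      then show ?thesis
      proof cases
        case 1
        have "degree (R ^ d) < degree (- f)"
        proof (cases "R = 0")
          case True then show ?thesis using d1 df dn by (simp add: power_0_left)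
        next
          case False then show ?thesis using 1 df by (simp add: degree_power_eq mult.commute)
        qed
        then have "degree E = n" unfolding E_def using df
          by (metis degree_add_eq_right degree_minus diff_conv_add_uminus)
        moreover have "2 * degree R + 1 \<le> n"
        proof -
          have "2 * degree R \<le> d * degree R" using d1 by simp
          then have "2 * degree R < n" using 1 by linarith
          then show ?thesis by simp
        qed
        ultimately show ?thesis using 1 dn d1 by linarith
      next
        case 2
        then have "d dvd n" by (metis dvd_triv_left)
        with not_dvd_nd[OF d1 dn cop] show ?thesis by simp
      next
        case 3
        then have R0: "R \<noteq> 0" by auto
        have "degree (R ^ d) = d * degree R" using R0 by (simp add: degree_power_eq)
        then have "degree (- f) < degree (R ^ d)" using 3 df by simp
        then have "degree E = d * degree R" unfolding E_def using \<open>degree (R ^ d) = d * degree R\<close>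
          by (metis degree_add_eq_left diff_conv_add_uminus)
        moreover have "degree R \<noteq> 1" using 3 dn by auto
        moreover have "degree R \<noteq> 0"
        proof
          assume "degree R = 0" with 3 show False by simp
        qed
        moreover have "2 * degree R \<le> d * degree R" using d1 by simp
        moreover have "d * degree R < n + d" using dh0 dR by simp
        ultimately show ?thesis using 3 by linarith
      qed
    qed
    have Eform: "E = smult (lead_coeff E) ([:- (-1), 1:] ^ degree E)"
      by (rule all_roots_eq[OF ac E0]) (use zE in blast)
    have dvdE: "[:1, 1:] ^ degree E dvd E"
    proof -
      have "[:- (-1), 1:] ^ degree E dvd smult (lead_coeff E) ([:- (-1), 1:] ^ degree E)"
        by (rule dvd_smult) (rule dvd_refl)
      then show ?thesis using Eform by simp
    qed
    have E1: "poly E (-1) = 0"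
    proof -
      have "poly (smult (lead_coeff E) ([:- (-1), 1:] ^ degree E)) (-1) = 0"
        using degE by (simp add: power_0_left)
      then show ?thesis using Eform by metis
    qed
    have Rb: "poly R (-1) = b" using zE[OF E1] by simp
    define A where "A = [:0,1:] * R"
    have pd: "p ^ d = - (T ^ d)" unfolding p_def by (simp add: smult_power z)
    have Ad: "A ^ d = monom 1 d * R ^ d" by (simp only: A_def power_mult_distrib monom_altdef smult_1_left)
    have Gf: "monom 1 d * f = [:1,1:] ^ (n+d) - T ^ d"
      unfolding f_def T_def using G_eq[OF d1 dn cop, where 'a='a] by (simp add: GG_def)
    have iden: "A ^ d - p ^ d = monom 1 d * E + [:1,1:] ^ (n+d)"
      unfolding Ad pd E_def right_diff_distrib Gf by simp
    have dvd1: "[:1,1:] ^ degree E dvd A ^ d - p ^ d"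
      unfolding iden using degE by (intro dvd_add dvd_mult dvdE le_imp_power_dvd) simp
    define S where "S = (\<Sum>i<d. p ^ (d - Suc i) * A ^ i)"
    have fac: "A ^ d - p ^ d = (A - p) * S" unfolding S_def by (rule power_diff_sumr2)
    have A1: "poly A (-1) = -b" unfolding A_def using Rb by simp
    have p1: "poly p (-1) = -b" unfolding b_def by simp
    have "poly S (-1) = (\<Sum>i<d. (-b) ^ (d - 1))"
      unfolding S_def poly_sum
    proof (rule sum.cong)
      fix i assume "i \<in> {..<d}"
      then have "d - Suc i + i = d - 1" by simp
      then show "poly (p ^ (d - Suc i) * A ^ i) (-1) = (-b) ^ (d - 1)"
        using A1 p1 by (simp add: power_add[symmetric])
    qed simp
    then have S1: "poly S (-1) = of_nat d * (-b) ^ (d - 1)" by simp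
    have S0: "poly S (-1) \<noteq> 0" using S1 b0 d1 by simp
    have Ap0: "A - p \<noteq> 0"
    proof
      assume "A - p = 0"
      then have "poly (A - p) 0 = 0" by simp
      then have "z * poly T 0 = 0" unfolding A_def p_def by simp
      then show False using z0 T0 by simp
    qed
    have SS: "S \<noteq> 0" using S0 by auto
    have P0: "(A - p) * S \<noteq> 0" using Ap0 SS by simp
    have "degree E \<le> order (-1) ((A - p) * S)"
      using dvd1 P0 order_divides[of "-1" "degree E" "(A - p) * S"] unfolding fac by simp
    also have "order (-1) ((A - p) * S) = order (-1) (A - p)"
      using order_mult[OF P0, of "-1"] order_0I[OF S0] by simp
    also have "\<dots> \<le> degree (A - p)" by (rule order_degree[OF Ap0])
    also have "\<dots> \<le> max (degree A) (degree p)" by (rule degree_diff_le_max)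
    finally have fin: "degree E \<le> max (degree A) (degree p)" .
    have "degree A \<le> 1 + degree R" unfolding A_def
      using degree_mult_le[of "[:0,1:]" R] by simp
    moreover have "degree p \<le> d - 1" unfolding p_def T_def
      using degree_smult_le[of z "TT n d :: 'a poly"] degree_TT[of n d, where 'a='a] by linarith
    ultimately show False using fin degE dn by linarith
  qed
qed

lemma if_dir:
  assumes ac: "alg_closed TYPE('a::field_char_0)" and hyp: "int d ^ 2 - 2 * int d < int n"
  shows "reachable TYPE('a) n d (n + d)"
proof -
  obtain z :: 'a where z: "z ^ d = -1" using alg_dth_root[OF ac] d1 by (metis zero_less_one less_trans)
  define T where "T = (TT n d :: 'a poly)"
  define f where "f = (ff n d :: 'a poly)"
  define p where "p = smult z T"
  define b where "b = - poly p (-1)"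
  define h where "h = [:p, [:0, -1:]:]"
  have df: "degree f = n" and lf: "lead_coeff f = 1"
    using ff_deg[OF d1 dn cop hyp, where 'a='a] unfolding f_def by blast+
  have sq: "rsquarefree f" unfolding f_def by (rule ff_sqf[OF d1 dn cop])
  have z0: "z \<noteq> 0" using z d1 by (metis zero_neq_neg_one power_0_left not_one_less_zero)
  have Tm: "poly T (-1) \<noteq> 0" unfolding T_def by (rule TT_m1[OF d1 dn cop])
  have pf: "x ^ d * poly f x = (1 + x) ^ (n + d) - poly T x ^ d" for x
    unfolding f_def T_def using poly_G[OF d1 dn cop, of x] by (simp add: GG_def)
  have pp: "poly p x ^ d = - (poly T x ^ d)" for x
    unfolding p_def using z by (simp add: power_mult_distrib)
  have onQ: "on_curve f d (-1) b"
  proof -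
    have e: "(-1) ^ d * poly f (-1) = - (poly T (-1) ^ d)" using pf[of "-1"] d1 by (simp add: power_0_left)
    have "b ^ d = (-1) ^ d * (- (poly T (-1) ^ d))"
      unfolding b_def using pp[of "-1"] by (simp add: power_minus')
    also have "\<dots> = (-1) ^ d * ((-1) ^ d * poly f (-1))" using e by simp
    also have "\<dots> = poly f (-1)" by (simp add: power_mult_distrib[symmetric])
    finally show ?thesis unfolding on_curve_def .
  qed
  have dh: "degree h = 1" unfolding h_def by simp
  have h0: "coeff h 0 = p" and h1: "coeff h 1 = [:0, -1:]" unfolding h_def by simp_all
  have ev: "eval_cr h x y = poly p x - x * y" for x y
    using eval_cr_deg1[of h x y] dh h0 h1 by simp
  have zer: "x = -1 \<and> y = b" if "on_curve f d x y" "eval_cr h x y = 0" for x y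
  proof -
    have px: "poly p x = x * y" using that(2) ev by simp
    have "poly p x ^ d = x ^ d * poly f x"
      using that(1) unfolding px on_curve_def by (simp add: power_mult_distrib)
    then have "(1 + x) ^ (n + d) = 0" using pf[of x] pp[of x] by simp
    then have x1: "x = -1" by (simp add: add_eq_0_iff)
    then have "y = b" using px unfolding b_def by simp
    with x1 show ?thesis by simp
  qed
  have hnz: "h \<noteq> 0" using dh by auto
  have pole: "pole_order_O f d h = n + d"
  proof -
    have ge: "d * degree (coeff h 1) + degree f * 1 \<le> pole_order_O f d h"
      by (rule po_ge) (use dh h1 in auto)
    then have ge': "n + d \<le> pole_order_O f d h" using df h1 by simp
    obtain j where j: "j \<le> degree h" "coeff h j \<noteq> 0"
      "pole_order_O f d h = d * degree (coeff h j) + degree f * j"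
      using po_in[OF hnz] by blast
    show ?thesis
    proof (cases "j = 0")
      case True
      have "degree p \<le> d - 1" unfolding p_def T_def
        using degree_smult_le[of z "TT n d :: 'a poly"] degree_TT[of n d, where 'a='a] by linarith
      then have "d * degree p \<le> d * (d - 1)" by simp
      moreover have "int (d * (d - 1)) < int (n + d)" using hyp d1
        by (simp add: of_nat_diff power2_eq_square algebra_simps)
      ultimately have "d * degree p < n + d" by linarith
      then show ?thesis using j True h0 ge' by simp
    next
      case False
      then have "j = 1" using j dh by simp
      then show ?thesis using j h1 df by simp
    qed
  qed
  have pm: "principal_multiple f d (-1) b (n + d)"
    unfolding principal_multiple_def using hnz dh d1 pole zer by (intro exI[of _ h]) auto
  have mini: "\<not> principal_multiple f d (-1) b k" if "0 < k" "k < n + d" for k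
    unfolding f_def b_def p_def T_def by (rule no_small[OF ac hyp z that])
  have po: "point_order f d (-1) b (n + d)"
    unfolding point_order_def using onQ pm mini d1 by auto
  have "1 < n + d" using d1 by simp
  then show ?thesis unfolding reachable_def using lf df sq po by blast
qed

end


lemma Lop_smult: "Lop c N (smult k F) = smult k (Lop c N F)"
  unfolding Lop_def pderiv_smult by (simp only: mult_smult_right mult_smult_left smult_diff_right smult_smult mult.commute)

context
  fixes n d :: nat
  assumes d1: "1 < d" and dn: "d < n" and cop: "coprime n d"
begin

lemma only_if_dir:
  assumes ac: "alg_closed TYPE('a::field_char_0)" and re: "reachable TYPE('a) n d (n + d)"
  shows "int d ^ 2 - 2 * int d < int n"
proof -
  obtain f :: "'a poly" and a b where df: "degree f = n" and po: "point_order f d a b (n + d)"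
    using re unfolding reachable_def by blast
  have onQ: "b ^ d = poly f a" and pm: "principal_multiple f d a b (n + d)"
    and mini: "\<And>k. 0 < k \<Longrightarrow> k < n + d \<Longrightarrow> \<not> principal_multiple f d a b k"
    using po unfolding point_order_def on_curve_def by blast+
  obtain ze :: 'a where ze: "ze ^ d = 1" "ze \<noteq> 1" using alg_zeta[OF ac d1] by blast
  have nd: "\<not> d dvd n" by (rule not_dvd_nd[OF d1 dn cop])
  have b0: "b \<noteq> 0"
  proof
    assume b0: "b = 0"
    define hq where "hq = [:[:-a, 1:]:]"
    have hq0: "hq \<noteq> 0" unfolding hq_def by simp
    have dq: "degree hq = 0" unfolding hq_def by simp
    have "pole_order_O f d hq = d"
      using po_in[OF hq0, of f d] dq unfolding hq_def by auto
    moreover have "x = a \<and> y = b" if "on_curve f d x y" "eval_cr hq x y = 0" for x y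
    proof -
      have "x = a" using that(2) eval_cr_deg1[of hq x y] dq unfolding hq_def by simp
      then have "y ^ d = 0" using that(1) onQ b0 d1 unfolding on_curve_def by (simp add: power_0_left)
      then show ?thesis using \<open>x = a\<close> b0 by simp
    qed
    ultimately have "principal_multiple f d a b d"
      unfolding principal_multiple_def using hq0 dq d1 by (intro exI[of _ hq]) auto
    then show False using mini[of d] d1 dn by simp
  qed
  obtain h where hnz: "h \<noteq> 0" and hd: "degree h < d" and hp: "pole_order_O f d h = n + d"
    and hz: "\<And>x y. on_curve f d x y \<and> eval_cr h x y = 0 \<Longrightarrow> x = a \<and> y = b"
    using pm unfolding principal_multiple_def by blast
  have lc: "coeff h (degree h) \<noteq> 0" using hnz by simp
  have "d * degree (coeff h (degree h)) + degree f * degree h \<le> n + d"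
    using po_ge[of "degree h" h d f] lc hp by simp
  then have nk: "n * degree h \<le> n + d" using df by simp
  have dh: "degree h \<le> 1"
  proof (rule ccontr)
    assume "\<not> degree h \<le> 1"
    then have "n * 2 \<le> n * degree h" by simp
    with nk dn show False by linarith
  qed
  obtain j where j: "j \<le> degree h" "coeff h j \<noteq> 0" "n + d = d * degree (coeff h j) + n * j"
    using po_in[OF hnz, of f d] hp df by auto
  have j0: "j \<noteq> 0"
  proof
    assume "j = 0"
    then have "n + d = d * degree (coeff h 0)" using j by simp
    then have "d dvd n + d" by simp
    then have "d dvd n" by (simp add: dvd_add_left_iff)
    with nd show False by simp
  qed
  have dh1: "degree h = 1" using j j0 dh by simp
  have jj: "j = 1" using j j0 dh1 by simp
  define h0 where "h0 = coeff h 0"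
  define h1 where "h1 = coeff h 1"
  have h1nz: "h1 \<noteq> 0" using j jj unfolding h1_def by simp
  have dg1: "degree h1 = 1" using j jj d1 unfolding h1_def by auto
  have dh0: "h0 \<noteq> 0 \<Longrightarrow> d * degree h0 < n + d"
  proof -
    assume "h0 \<noteq> 0"
    then have le: "d * degree h0 + degree f * 0 \<le> n + d" using po_ge[of 0 h d f] hp unfolding h0_def by simp
    have "d * degree h0 \<noteq> n + d"
    proof
      assume "d * degree h0 = n + d"
      then have "d dvd n + d" by (metis dvd_triv_left)
      then have "d dvd n" by (simp add: dvd_add_left_iff)
      with nd show False by simp
    qed
    with le show ?thesis by simp
  qed
  have ev: "eval_cr h x y = poly h0 x + poly h1 x * y" for x y
    using eval_cr_deg1[of h x y] dh1 unfolding h0_def h1_def by simp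
  have f0: "f \<noteq> 0" using df dn by auto
  define X where "X = (- h1) ^ d * f"
  define Nn where "Nn = h0 ^ d - X"
  have dX: "degree X = n + d"
  proof -
    have "degree ((- h1) ^ d) = d" using h1nz dg1 by (simp add: degree_power_eq)
    moreover have "(- h1) ^ d \<noteq> 0" using h1nz by simp
    ultimately show ?thesis unfolding X_def using f0 df by (simp add: degree_mult_eq)
  qed
  have dh0d: "degree (h0 ^ d) < n + d"
  proof (cases "h0 = 0")
    case True then show ?thesis using d1 by (simp add: power_0_left)
  next
    case False then show ?thesis using dh0 by (simp add: degree_power_eq mult.commute)
  qed
  have dN: "degree Nn = n + d"
  proof -
    have "Nn = h0 ^ d + - X" unfolding Nn_def by simp
    moreover have "degree (h0 ^ d + - X) = degree (- X)"
      by (rule degree_add_eq_right) (use dh0d dX in simp)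
    ultimately show ?thesis using dX by simp
  qed
  have N0: "Nn \<noteq> 0" using dN d1 by auto
  have rt: "\<exists>s. on_curve f d r s \<and> eval_cr h r s = 0" if "poly Nn r = 0" for r
  proof -
    have e: "poly h0 r ^ d = (- poly h1 r) ^ d * poly f r"
      using that unfolding Nn_def X_def by simp
    show ?thesis
    proof (cases "poly h1 r = 0")
      case True
      then have "poly h0 r ^ d = 0" using e d1 by (simp add: power_0_left)
      then have h0r: "poly h0 r = 0" by simp
      obtain s where s: "s ^ d = poly f r" using alg_dth_root[OF ac, of d "poly f r"] d1 by auto
      have "on_curve f d r s" using s unfolding on_curve_def by simp
      moreover have "eval_cr h r s = 0" unfolding ev using True h0r by simp
      ultimately show ?thesis by blast
    next
      case False
      define s where "s = poly h0 r / (- poly h1 r)"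
      have "s ^ d = poly h0 r ^ d / (- poly h1 r) ^ d" unfolding s_def by (rule power_divide)
      also have "\<dots> = poly f r" using e False by simp
      finally have "on_curve f d r s" unfolding on_curve_def .
      moreover have "eval_cr h r s = 0" unfolding ev s_def using False by (simp add: field_simps)
      ultimately show ?thesis by blast
    qed
  qed
  have rta: "r = a" if "poly Nn r = 0" for r using rt[OF that] hz by blast
  have Nform: "Nn = smult (lead_coeff Nn) ([:-a, 1:] ^ degree Nn)"
    by (rule all_roots_eq[OF ac N0]) (use rta in blast)
  have Na: "poly Nn a = 0"
  proof -
    have "poly (smult (lead_coeff Nn) ([:-a, 1:] ^ degree Nn)) a = 0" using dN d1 by (simp add: power_0_left)
    then show ?thesis using Nform by metis
  qed
  have hab: "poly h0 a + poly h1 a * b = 0"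
  proof -
    obtain s where s: "on_curve f d a s" "eval_cr h a s = 0" using rt[OF Na] by blast
    then have "s = b" using hz by blast
    with s show ?thesis unfolding ev by simp
  qed
  have h1a: "poly h1 a \<noteq> 0"
  proof
    assume h1a: "poly h1 a = 0"
    then have h0a: "poly h0 a = 0" using hab by simp
    have "on_curve f d a (ze * b)" using onQ ze unfolding on_curve_def by (simp add: power_mult_distrib)
    moreover have "eval_cr h a (ze * b) = 0" unfolding ev using h1a h0a by simp
    ultimately have "ze * b = b" using hz by blast
    then have "(ze - 1) * b = 0" by (simp add: algebra_simps)
    with ze b0 show False by simp
  qed
  define v where "v = coeff h1 1"
  define u where "u = coeff h1 0"
  define \<beta> where "\<beta> = - u / v"
  have v0: "v \<noteq> 0" unfolding v_def using dg1 h1nz by (metis leading_coeff_0_iff)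
  have h1f: "h1 = smult v [:-\<beta>, 1:]"
  proof -
    have "h1 = [:u, v:]" unfolding u_def v_def using deg1_form[of h1] dg1 by simp
    then show ?thesis unfolding \<beta>_def using v0 by simp
  qed
  have h1b: "poly h1 \<beta> = 0" unfolding h1f by simp
  have ba: "\<beta> \<noteq> a" using h1a h1b by auto
  have h0b: "poly h0 \<beta> \<noteq> 0"
  proof
    assume h0b: "poly h0 \<beta> = 0"
    have "poly Nn \<beta> = 0" unfolding Nn_def X_def using h0b h1b d1 by (simp add: power_0_left)
    then have "\<beta> = a" by (rule rta)
    with ba show False by simp
  qed
  have h00: "h0 \<noteq> 0" using h0b by auto
  define k where "k = degree h0"
  have dk: "d * k < n + d" unfolding k_def using dh0[OF h00] .
  define W where "W = smult (of_nat d) ([:-a, 1:] * pderiv h0) - smult (of_nat (n + d)) h0"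
  have LN: "Lop (-a) (n + d) Nn = 0"
  proof -
    have "Lop (-a) (n + d) ([:-a, 1:] ^ (n + d)) = 0" by (rule Lop_lin_pow) (use d1 in simp)
    then show ?thesis by (subst Nform) (simp add: Lop_smult dN)
  qed
  have pw: "h0 ^ d = h0 ^ (d - 1) * h0" using d1 by (cases d) (simp_all add: power_Suc2 del: power_Suc)
  have LH: "Lop (-a) (n + d) (h0 ^ d) = h0 ^ (d - 1) * W"
  proof -
    have e1: "[:-a,1:] * smult (of_nat d) (h0^(d-1) * pderiv h0) = h0^(d-1) * smult (of_nat d) ([:-a,1:] * pderiv h0)"
      by (simp only: mult_smult_right mult.left_commute)
    have e2: "smult (of_nat (n+d)) (h0^d) = h0^(d-1) * smult (of_nat (n+d)) h0"
      by (simp only: pw mult_smult_right)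
    show ?thesis unfolding Lop_def pderiv_power e1 e2 W_def by (simp only: right_diff_distrib)
  qed
  have LX: "[:-\<beta>, 1:] ^ (d - 1) dvd Lop (-a) (n + d) X"
  proof -
    define M where "M = smult ((- v) ^ d) f"
    have mh: "- h1 = smult (- v) [:-\<beta>, 1:]" using h1f by (simp only: smult_minus_left)
    have Xf: "X = [:-\<beta>, 1:] ^ d * M"
      by (simp only: X_def M_def mh smult_power mult_smult_left mult_smult_right)
    have dd: "[:-\<beta>, 1:] ^ (d - 1) dvd [:-\<beta>, 1:] ^ d" by (rule le_imp_power_dvd) simp
    have pX: "pderiv X = [:-\<beta>, 1:] ^ d * pderiv M + M * smult (of_nat d) ([:-\<beta>, 1:] ^ (d - 1) * pderiv [:-\<beta>, 1:])"
      unfolding Xf pderiv_mult pderiv_power ..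
    have "[:-\<beta>, 1:] ^ (d - 1) dvd pderiv X"
      unfolding pX by (intro dvd_add dvd_mult2 dvd_mult dvd_smult dd dvd_refl)
    moreover have "[:-\<beta>, 1:] ^ (d - 1) dvd X" unfolding Xf by (intro dvd_mult2 dd)
    ultimately show ?thesis unfolding Lop_def by (intro dvd_diff dvd_mult dvd_smult)
  qed
  have "Lop (-a) (n + d) (h0 ^ d) = Lop (-a) (n + d) X"
    using LN unfolding Nn_def Lop_diff by simp
  then have dvdW: "[:-\<beta>, 1:] ^ (d - 1) dvd h0 ^ (d - 1) * W" using LX LH by simp
  have cW: "coeff W k = (of_nat d * of_nat k - of_nat (n + d)) * lead_coeff h0"
  proof -
    have c1: "coeff (pderiv h0) k = 0" unfolding k_def by (simp add: coeff_pderiv coeff_eq_0)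
    have c2: "coeff ([:-a, 1:] * pderiv h0) k = of_nat k * lead_coeff h0"
    proof (cases k)
      case 0 then show ?thesis using c1 by (simp add: coeff_lin)
    next
      case (Suc m) then show ?thesis using c1 unfolding k_def by (simp add: coeff_lin coeff_pderiv)
    qed
    show ?thesis unfolding W_def using c2 by (simp add: k_def algebra_simps)
  qed
  have W0: "W \<noteq> 0"
  proof
    assume "W = 0"
    then have "(of_nat d * of_nat k - of_nat (n + d)) * lead_coeff h0 = (0::'a)" using cW by simp
    then have "(of_nat (d * k) :: 'a) = of_nat (n + d)" using h00 by simp
    then have "d * k = n + d" by (simp only: of_nat_eq_iff)
    with dk show False by simp
  qed
  have P0: "h0 ^ (d - 1) * W \<noteq> 0" using h00 W0 by simp
  have "d - 1 \<le> order \<beta> (h0 ^ (d - 1) * W)"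
    using dvdW P0 order_divides[of \<beta> "d - 1" "h0 ^ (d - 1) * W"] by blast
  also have "\<dots> = order \<beta> W"
    using order_mult[OF P0, of \<beta>] order_0I[of "h0 ^ (d - 1)" \<beta>] h0b by simp
  also have "\<dots> \<le> degree W" by (rule order_degree[OF W0])
  also have "degree W \<le> k"
  proof -
    have "degree ([:-a, 1:] * pderiv h0) \<le> k"
    proof (cases "pderiv h0 = 0")
      case True then show ?thesis by simp
    next
      case False
      then have "0 < k" unfolding k_def by (simp add: pderiv_eq_0_iff)
      have "degree ([:-a, 1:] * pderiv h0) \<le> degree [:-a, 1:] + degree (pderiv h0)" by (rule degree_mult_le)
      also have "\<dots> = 1 + (k - 1)" unfolding k_def by (simp add: degree_pderiv)
      finally show ?thesis using \<open>0 < k\<close> by simp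
    qed
    then show ?thesis unfolding W_def
      by (intro degree_diff_le order.trans[OF degree_smult_le]) (simp_all add: k_def)
  qed
  finally have "d - 1 \<le> k" .
  then have "d * (d - 1) \<le> d * k" by simp
  with dk have "d * (d - 1) < n + d" by linarith
  then have "int (d * (d - 1)) < int (n + d)" by (simp only: of_nat_less_iff)
  then show ?thesis using d1 by (simp add: of_nat_diff power2_eq_square algebra_simps)
qed

end

theorem mainTheorem4:
  fixes n d :: nat
  assumes "alg_closed TYPE('a::field_char_0)"
    and "1 < d" and "d < n" and "coprime n d"
  shows "reachable TYPE('a) n d (n + d) \<longleftrightarrow> int d ^ 2 - 2 * int d < int n"
proof
  assume "reachable TYPE('a) n d (n + d)"
  then show "int d ^ 2 - 2 * int d < int n"
    by (rule only_if_dir[OF assms(2) assms(3) assms(4) assms(1)])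
next
  assume "int d ^ 2 - 2 * int d < int n"
  then show "reachable TYPE('a) n d (n + d)"
    by (rule if_dir[OF assms(2) assms(3) assms(4) assms(1)])
qed

end
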